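(* Let $G$ be a right modular groupoid and let $x \notin G$. Then $G \cup \{x\}$ can be made into a right modular groupoid that is a generalised inflation of $G$ (with respect to the decomposition $G_a = \{a\}$ for $a \neq c$, $G_c = \{c, x\}$ for some $c\in G$, and maps $\alpha_x,\beta_x$ for the new element $x$) if and only if there exist maps $\alpha_x, \beta_x : G \to G$ and an element $c \in G$ such that for all $a, b \in G$: (1) $(\alpha_x(a)\cdot a)\cdot b = (ba)\cdot \beta_x(ba)$; (2) $(a\cdot \beta_x(a))\cdot b = (b\cdot\beta_x(b))\cdot a$; (3) $(\alpha_x(c)\cdot \beta_x(c))\cdot a = (a\cdot\beta_x(a))\cdot \beta_x(a\cdot \beta_x(a))$.
   Context: A groupoid is a set with a binary operation, written $xy$ or $x\cdot y$. A groupoid $G$ is right modular if $xy\cdot z = zy\cdot x$ for all $x,y,z \in G$. A groupoid $H$ is a generalised inflation of its subgroupoid $U$ if $H = \bigcup_{u\in U} H_u$ where (1) $u \in H_u$ for all $u \in U$, (2) $H_u\cap H_v=\emptyset$ for $u\neq v$, (3) for every $y \in H$ there are maps $\alpha_y, \beta_y : U \to U$ such that for all $y \in H_u$ and $z \in H_v$ ($u,v\in U$) one has $yz = \alpha_y(v)\cdot \beta_z(u)$ (product computed in $U$), and (4) for $u \in U$, $\alpha_u$ and $\beta_u$ are both the constant map on $U$ with value $u$. In particular, with $U=G$, $H = G\cup\{x\}$ and $x \in H_c$, the multiplication involving $x$ is $xa = \alpha_x(a)\cdot a$, $ax = a\cdot\beta_x(a)$ for $a\in G$, and $xx = \alpha_x(c)\cdot\beta_x(c)$,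 while products of elements of $G$ are as in $G$. *)

theory Defs
  imports Main
begin

definition groupoid :: "'a set \<Rightarrow> ('a \<Rightarrow> 'a \<Rightarrow> 'a) \<Rightarrow> bool" where
  "groupoid S m \<longleftrightarrow> (\<forall>a\<in>S. \<forall>b\<in>S. m a b \<in> S)"

definition right_modular :: "'a set \<Rightarrow> ('a \<Rightarrow> 'a \<Rightarrow> 'a) \<Rightarrow> bool" where
  "right_modular S m \<longleftrightarrow> (\<forall>x\<in>S. \<forall>y\<in>S. \<forall>z\<in>S. m (m x y) z = m (m z y) x)"

text \<open>H (with operation m) is a generalised inflation of its subgroupoid U
  via the decomposition P (P u is the block H_u); the operation of U is the
  restriction of m.  The maps alpha_y, beta_y are encoded as alpha y, beta y.\<close>
definition gen_inflation ::
  "'a set \<Rightarrow> ('a \<Rightarrow> 'a \<Rightarrow> 'a) \<Rightarrow> 'a set \<Rightarrow> ('a \<Rightarrow> 'a set) \<Rightarrow> bool" where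
  "gen_inflation H m U P \<longleftrightarrow>
     U \<subseteq> H \<and> groupoid U m \<and>
     H = (\<Union>u\<in>U. P u) \<and>
     (\<forall>u\<in>U. u \<in> P u) \<and>
     (\<forall>u\<in>U. \<forall>v\<in>U. u \<noteq> v \<longrightarrow> P u \<inter> P v = {}) \<and>
     (\<exists>\<alpha> \<beta> :: 'a \<Rightarrow> 'a \<Rightarrow> 'a.
        (\<forall>y\<in>H. \<forall>v\<in>U. \<alpha> y v \<in> U \<and> \<beta> y v \<in> U) \<and>
        (\<forall>u\<in>U. \<forall>v\<in>U. \<forall>y\<in>P u. \<forall>z\<in>P v. m y z = m (\<alpha> y v) (\<beta> z u)) \<and>
        (\<forall>u\<in>U. \<forall>v\<in>U. \<alpha> u v = u \<and> \<beta> u v = u))"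

end

theory Submission
  imports Defs
begin

theorem theorem4:
  fixes G :: "'a set" and mul :: "'a \<Rightarrow> 'a \<Rightarrow> 'a" and x :: 'a
  assumes "groupoid G mul" and "right_modular G mul" and "x \<notin> G"
  shows "(\<exists>m' c. c \<in> G \<and> groupoid (insert x G) m'
            \<and> (\<forall>a\<in>G. \<forall>b\<in>G. m' a b = mul a b)
            \<and> right_modular (insert x G) m'
            \<and> gen_inflation (insert x G) m' G (\<lambda>a. if a = c then {c, x} else {a}))
     \<longleftrightarrow>
     (\<exists>\<alpha> \<beta> :: 'a \<Rightarrow> 'a. \<exists>c. c \<in> G \<and> (\<forall>a\<in>G. \<alpha> a \<in> G \<and> \<beta> a \<in> G) \<and>
        (\<forall>a\<in>G. \<forall>b\<in>G.
           mul (mul (\<alpha> a) a) b = mul (mul b a) (\<beta> (mul b a)) \<and>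
           mul (mul a (\<beta> a)) b = mul (mul b (\<beta> b)) a \<and>
           mul (mul (\<alpha> c) (\<beta> c)) a = mul (mul a (\<beta> a)) (\<beta> (mul a (\<beta> a)))))"
proof
  have cl: "\<And>a b. a \<in> G \<Longrightarrow> b \<in> G \<Longrightarrow> mul a b \<in> G" using assms(1) by (simp add: groupoid_def)
  assume "\<exists>m' c. c \<in> G \<and> groupoid (insert x G) m'
            \<and> (\<forall>a\<in>G. \<forall>b\<in>G. m' a b = mul a b)
            \<and> right_modular (insert x G) m'
            \<and> gen_inflation (insert x G) m' G (\<lambda>a. if a = c then {c, x} else {a})"
  then obtain m' c where c: "c \<in> G" and mG: "\<forall>a\<in>G. \<forall>b\<in>G. m' a b = mul a b"
    and rm: "right_modular (insert x G) m'"
    and gi: "gen_inflation (insert x G) m' G (\<lambda>a. if a = c then {c, x} else {a})" by blast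
  define P where "P = (\<lambda>a. if a = c then {c, x} else {a})"
  from gi obtain \<alpha> \<beta> where ab: "\<forall>y\<in>insert x G. \<forall>v\<in>G. \<alpha> y v \<in> G \<and> \<beta> y v \<in> G"
    and mul_eq: "\<forall>u\<in>G. \<forall>v\<in>G. \<forall>y\<in>P u. \<forall>z\<in>P v. m' y z = m' (\<alpha> y v) (\<beta> z u)"
    and id: "\<forall>u\<in>G. \<forall>v\<in>G. \<alpha> u v = u \<and> \<beta> u v = u"
  proof -
    have "\<exists>\<alpha> \<beta> :: 'a \<Rightarrow> 'a \<Rightarrow> 'a. (\<forall>y\<in>insert x G. \<forall>v\<in>G. \<alpha> y v \<in> G \<and> \<beta> y v \<in> G) \<and>
        (\<forall>u\<in>G. \<forall>v\<in>G. \<forall>y\<in>P u. \<forall>z\<in>P v. m' y z = m' (\<alpha> y v) (\<beta> z u)) \<and>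
        (\<forall>u\<in>G. \<forall>v\<in>G. \<alpha> u v = u \<and> \<beta> u v = u)"
      using gi unfolding gen_inflation_def P_def by (elim conjE) assumption
    then show ?thesis using that by blast
  qed
  have xP: "x \<in> P c" and aP: "\<And>a. a \<in> P a" by (auto simp: P_def)
  have xa: "m' x a = mul (\<alpha> x a) a" if "a \<in> G" for a
    using mul_eq[rule_format, OF c that xP aP[of a]] id that c ab mG by auto
  have ax: "m' a x = mul a (\<beta> x a)" if "a \<in> G" for a
    using mul_eq[rule_format, OF that c aP[of a] xP] id that c ab mG by auto
  have xx: "m' x x = mul (\<alpha> x c) (\<beta> x c)"
    using mul_eq[rule_format, OF c c xP xP] c ab mG by auto
  have A: "\<forall>a\<in>G. \<alpha> x a \<in> G \<and> \<beta> x a \<in> G" using ab by auto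
  have R: "\<And>p q r. p \<in> insert x G \<Longrightarrow> q \<in> insert x G \<Longrightarrow> r \<in> insert x G \<Longrightarrow> m' (m' p q) r = m' (m' r q) p"
    using rm unfolding right_modular_def by blast
  show "\<exists>\<alpha> \<beta> :: 'a \<Rightarrow> 'a. \<exists>c. c \<in> G \<and> (\<forall>a\<in>G. \<alpha> a \<in> G \<and> \<beta> a \<in> G) \<and>
        (\<forall>a\<in>G. \<forall>b\<in>G.
           mul (mul (\<alpha> a) a) b = mul (mul b a) (\<beta> (mul b a)) \<and>
           mul (mul a (\<beta> a)) b = mul (mul b (\<beta> b)) a \<and>
           mul (mul (\<alpha> c) (\<beta> c)) a = mul (mul a (\<beta> a)) (\<beta> (mul a (\<beta> a))))"
  proof (intro exI conjI ballI)
    show "c \<in> G" by fact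
    fix a assume a: "a \<in> G"
    show "\<alpha> x a \<in> G" "\<beta> x a \<in> G" using A a by auto
  next
    fix a b assume a: "a \<in> G" and b: "b \<in> G"
    have 1: "m' (m' x a) b = m' (m' b a) x" using R a b by auto
    then show "mul (mul (\<alpha> x a) a) b = mul (mul b a) (\<beta> x (mul b a))"
      using xa ax a b A cl mG by auto
    have 2: "m' (m' a x) b = m' (m' b x) a" using R a b by auto
    then show "mul (mul a (\<beta> x a)) b = mul (mul b (\<beta> x b)) a"
      using xa ax a b A cl mG by auto
    have 3: "m' (m' x x) a = m' (m' a x) x" using R a by auto
    then show "mul (mul (\<alpha> x c) (\<beta> x c)) a = mul (mul a (\<beta> x a)) (\<beta> x (mul a (\<beta> x a)))"
      using xa ax xx a c A cl mG by auto
  qed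
next
  have cl: "\<And>a b. a \<in> G \<Longrightarrow> b \<in> G \<Longrightarrow> mul a b \<in> G" using assms(1) by (simp add: groupoid_def)
  have nx: "\<And>a b. a \<in> G \<Longrightarrow> b \<in> G \<Longrightarrow> mul a b \<noteq> x" using cl assms(3) by blast
  have RM: "\<And>a b d. a \<in> G \<Longrightarrow> b \<in> G \<Longrightarrow> d \<in> G \<Longrightarrow> mul (mul a b) d = mul (mul d b) a"
    using assms(2) unfolding right_modular_def by blast
  assume "\<exists>\<alpha> \<beta> :: 'a \<Rightarrow> 'a. \<exists>c. c \<in> G \<and> (\<forall>a\<in>G. \<alpha> a \<in> G \<and> \<beta> a \<in> G) \<and>
        (\<forall>a\<in>G. \<forall>b\<in>G.
           mul (mul (\<alpha> a) a) b = mul (mul b a) (\<beta> (mul b a)) \<and>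
           mul (mul a (\<beta> a)) b = mul (mul b (\<beta> b)) a \<and>
           mul (mul (\<alpha> c) (\<beta> c)) a = mul (mul a (\<beta> a)) (\<beta> (mul a (\<beta> a))))"
  then obtain \<alpha> \<beta> c where c: "c \<in> G" and A: "\<And>a. a\<in>G \<Longrightarrow> \<alpha> a \<in> G \<and> \<beta> a \<in> G"
    and C1: "\<And>a b. a\<in>G \<Longrightarrow> b\<in>G \<Longrightarrow> mul (mul (\<alpha> a) a) b = mul (mul b a) (\<beta> (mul b a))"
    and C2: "\<And>a b. a\<in>G \<Longrightarrow> b\<in>G \<Longrightarrow> mul (mul a (\<beta> a)) b = mul (mul b (\<beta> b)) a"
    and C3: "\<And>a. a\<in>G \<Longrightarrow> mul (mul (\<alpha> c) (\<beta> c)) a = mul (mul a (\<beta> a)) (\<beta> (mul a (\<beta> a)))"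
    by blast
  define m' where "m' = (\<lambda>p q. if p = x \<and> q = x then mul (\<alpha> c) (\<beta> c)
     else if p = x then mul (\<alpha> q) q else if q = x then mul p (\<beta> p) else mul p q)"
  have xG: "\<And>a. a \<in> G \<Longrightarrow> a \<noteq> x" using assms(3) by blast
  have mG: "\<And>p q. p \<in> insert x G \<Longrightarrow> q \<in> insert x G \<Longrightarrow> m' p q \<in> G"
    unfolding m'_def using A c cl by auto
  have mGG: "\<And>a b. a \<in> G \<Longrightarrow> b \<in> G \<Longrightarrow> m' a b = mul a b" unfolding m'_def using xG by auto
  have m'x1: "\<And>a. a \<in> G \<Longrightarrow> m' x a = mul (\<alpha> a) a" unfolding m'_def using xG by auto
  have m'x2: "\<And>a. a \<in> G \<Longrightarrow> m' a x = mul a (\<beta> a)" unfolding m'_def using xG by auto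
  have m'x3: "m' x x = mul (\<alpha> c) (\<beta> c)" unfolding m'_def by auto
  have rm: "right_modular (insert x G) m'"
    unfolding right_modular_def
  proof (intro ballI)
    fix p q r assume p: "p \<in> insert x G" and q: "q \<in> insert x G" and r: "r \<in> insert x G"
    have pq: "m' p q \<in> G" and rq: "m' r q \<in> G" using mG p q r by auto
    show "m' (m' p q) r = m' (m' r q) p"
    proof (cases "p = x")
      case px: True
      show ?thesis
      proof (cases "q = x")
        case qx: True
        show ?thesis
        proof (cases "r = x")
          case True then show ?thesis using px by simp
        next
          case False then have rG: "r \<in> G" using r by auto
          show ?thesis using px qx rG A c cl C3[OF rG] by (simp add: mGG m'x1 m'x2 m'x3)
        qed
      next
        case False then have qG: "q \<in> G" using q by auto
        show ?thesis
        proof (cases "r = x")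
          case True then show ?thesis using px by simp
        next
          case False then have rG: "r \<in> G" using r by auto
          show ?thesis using px qG rG A c cl C1[OF qG rG] by (simp add: mGG m'x1 m'x2 m'x3)
        qed
      qed
    next
      case False then have pG: "p \<in> G" using p by auto
      show ?thesis
      proof (cases "q = x")
        case qx: True
        show ?thesis
        proof (cases "r = x")
          case True then show ?thesis using pG qx A c cl C3[OF pG] by (simp add: mGG m'x1 m'x2 m'x3)
        next
          case False then have rG: "r \<in> G" using r by auto
          show ?thesis using pG qx rG A c cl C2[OF pG rG] by (simp add: mGG m'x1 m'x2 m'x3)
        qed
      next
        case False then have qG: "q \<in> G" using q by auto
        show ?thesis
        proof (cases "r = x")
          case True then show ?thesis using pG qG A c cl C1[OF qG pG] by (simp add: mGG m'x1 m'x2 m'x3)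
        next
          case False then have rG: "r \<in> G" using r by auto
          show ?thesis using pG qG rG cl RM[OF pG qG rG] by (simp add: mGG)
        qed
      qed
    qed
  qed
  define P where "P = (\<lambda>a. if a = c then {c, x} else {a})"
  define \<alpha>' where "\<alpha>' = (\<lambda>y v. if y = x then \<alpha> v else y)"
  define \<beta>' where "\<beta>' = (\<lambda>z u. if z = x then \<beta> u else z)"
  have gi: "gen_inflation (insert x G) m' G P"
    unfolding gen_inflation_def
  proof (intro conjI)
    show "G \<subseteq> insert x G" by auto
    show "groupoid G m'" unfolding groupoid_def using mG by auto
    show "insert x G = (\<Union>u\<in>G. P u)" unfolding P_def using c by auto
    show "\<forall>u\<in>G. u \<in> P u" unfolding P_def by auto
    show "\<forall>u\<in>G. \<forall>v\<in>G. u \<noteq> v \<longrightarrow> P u \<inter> P v = {}" unfolding P_def using xG by auto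
    show "\<exists>\<alpha> \<beta>. (\<forall>y\<in>insert x G. \<forall>v\<in>G. \<alpha> y v \<in> G \<and> \<beta> y v \<in> G) \<and>
        (\<forall>u\<in>G. \<forall>v\<in>G. \<forall>y\<in>P u. \<forall>z\<in>P v. m' y z = m' (\<alpha> y v) (\<beta> z u)) \<and>
        (\<forall>u\<in>G. \<forall>v\<in>G. \<alpha> u v = u \<and> \<beta> u v = u)"
    proof -
      have h1: "\<forall>y\<in>insert x G. \<forall>v\<in>G. \<alpha>' y v \<in> G \<and> \<beta>' y v \<in> G"
        unfolding \<alpha>'_def \<beta>'_def using A by auto
      have h2: "\<forall>u\<in>G. \<forall>v\<in>G. \<forall>y\<in>P u. \<forall>z\<in>P v. m' y z = m' (\<alpha>' y v) (\<beta>' z u)"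
      proof (intro ballI)
        fix u v y z assume u: "u \<in> G" and v: "v \<in> G" and y: "y \<in> P u" and z: "z \<in> P v"
        have yy: "(y = x \<and> u = c) \<or> (y \<noteq> x \<and> y = u)" using y xG u unfolding P_def by (auto split: if_splits)
        have zz: "(z = x \<and> v = c) \<or> (z \<noteq> x \<and> z = v)" using z xG v unfolding P_def by (auto split: if_splits)
        show "m' y z = m' (\<alpha>' y v) (\<beta>' z u)"
          using yy zz u v A xG unfolding \<alpha>'_def \<beta>'_def by (auto simp: mGG m'x1 m'x2 m'x3)
      qed
      have h3: "\<forall>u\<in>G. \<forall>v\<in>G. \<alpha>' u v = u \<and> \<beta>' u v = u"
        unfolding \<alpha>'_def \<beta>'_def using xG by auto
      show ?thesis using h1 h2 h3 by blast
    qed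
  qed
  show "\<exists>m' c. c \<in> G \<and> groupoid (insert x G) m'
            \<and> (\<forall>a\<in>G. \<forall>b\<in>G. m' a b = mul a b)
            \<and> right_modular (insert x G) m'
            \<and> gen_inflation (insert x G) m' G (\<lambda>a. if a = c then {c, x} else {a})"
    using c mG mGG rm gi unfolding P_def groupoid_def by blast
qed

end
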